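(* For $n=0,1,2,\ldots$ let $R_n=\sum_{k=0}^n\binom{n}{k}\binom{n+k}{k}\frac{1}{2k-1}$. Then $\lim_{n\to\infty}\frac{R_{n+1}}{R_n}=3+2\sqrt{2}$. *)

theory Defs
  imports Complex_Main
begin

definition R :: "nat \<Rightarrow> real" where
  "R n = (\<Sum>k=0..n. real (n choose k) * real ((n + k) choose k) / (2 * real k - 1))"

end

theory Submission
  imports Defs
begin

definition A :: "nat \<Rightarrow> nat \<Rightarrow> nat" where
  "A n k = (n choose k) * ((n + k) choose k)"

lemma L1: "(n + 1 - k) * A (n+1) k = (n + 1 + k) * A n k"
proof -
  have 1: "(n + 1 - k) * ((n+1) choose k) = (n+1) * (n choose k)"
    using binomial_absorb_comp[of "n+1" k] by simp
  have 2: "(n+1) * ((n+1+k) choose k) = (n+1+k) * ((n+k) choose k)"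
    using binomial_absorb_comp[of "n+1+k" k] by simp
  have "(n + 1 - k) * A (n+1) k = ((n + 1 - k) * ((n+1) choose k)) * ((n+1+k) choose k)"
    by (simp add: A_def ac_simps)
  also have "\<dots> = ((n+1) * (n choose k)) * ((n+1+k) choose k)" by (simp only: 1)
  also have "\<dots> = (n choose k) * ((n+1) * ((n+1+k) choose k))" by (simp only: mult_ac)
  also have "\<dots> = (n choose k) * ((n+1+k) * ((n+k) choose k))" by (simp only: 2)
  also have "\<dots> = (n + 1 + k) * A n k" by (simp only: A_def mult_ac)
  finally show ?thesis .
qed


lemma L2: "(k+1)^2 * A n (k+1) = (n - k) * (n + k + 1) * A n k"
proof -
  have 1: "(k+1) * (n choose (k+1)) = (n - k) * (n choose k)"
    using Suc_eq_plus1 binomial_absorb_comp binomial_absorption by presburger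
  have 2: "(k+1) * ((n+k+1) choose (k+1)) = (n+k+1) * ((n+k) choose k)"
    using Suc_times_binomial[of k "n+k"] by simp
  have "(k+1)^2 * A n (k+1) = ((k+1) * (n choose (k+1))) * ((k+1) * ((n+k+1) choose (k+1)))"
    unfolding A_def power2_eq_square by (simp only: add.assoc mult_ac)
  also have "\<dots> = ((n - k) * (n choose k)) * ((n+k+1) * ((n+k) choose k))" by (simp only: 1 2)
  also have "\<dots> = (n - k) * (n + k + 1) * A n k" unfolding A_def by (simp only: mult_ac)
  finally show ?thesis .
qed
lemma A_zero: "n < k \<Longrightarrow> A n k = 0" by (simp add: A_def)
lemma A_0: "A n 0 = 1" by (simp add: A_def)

lemma E_main:
  assumes "1 \<le> k" "k \<le> n + 1"
  shows "real ((n+2)*A(n+2) k + (n+1)*A n k) = real ((2*n+3)*A(n+1) k + (4*n+6)*A(n+1) (k-1))"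
proof -
  obtain i where i: "k = i + 1" using assms(1) by (metis add.commute le_Suc_ex)
  define X where "X = real (A (n+2) k)"
  define Y where "Y = real (A n k)"
  define c where "c = real (A (n+1) k)"
  define Z where "Z = real (A (n+1) (k-1))"
  have n1: "(n + 2 - k) * A (n+2) k = (n + 2 + k) * A (n+1) k"
    using L1[of "n+1" k] by simp
  have n2: "(n + 1 - k) * A (n+1) k = (n + 1 + k) * A n k"
    using L1[of n k] by simp
  have n3: "k^2 * A (n+1) k = (n + 2 - k) * (n + 1 + k) * A (n+1) (k-1)"
    using L2[of i "n+1"] unfolding i by (simp add: algebra_simps)
  have d1: "real (n + 2 - k) = real n + 2 - real k" using assms by (simp add: of_nat_diff)
  have d2: "real (n + 1 - k) = real n + 1 - real k" using assms by (simp add: of_nat_diff)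
  have e1: "(real n + 2 - real k) * X = (real n + 2 + real k) * c"
    using arg_cong[OF n1, of real] unfolding X_def c_def of_nat_mult d1 by simp
  have e2: "(real n + 1 - real k) * c = (real n + 1 + real k) * Y"
    using arg_cong[OF n2, of real] unfolding Y_def c_def of_nat_mult d2 by simp
  have e3: "(real k)^2 * c = (real n + 2 - real k) * (real n + 1 + real k) * Z"
    using arg_cong[OF n3, of real] unfolding Z_def c_def of_nat_mult d1 of_nat_power by simp
  define m where "m = (real n + 2 - real k) * (real n + 1 + real k)"
  have m0: "m \<noteq> 0" unfolding m_def using assms by auto
  have "m * ((real n + 2) * X + (real n + 1) * Y)
       = (real n + 2) * (real n + 1 + real k) * ((real n + 2 - real k) * X)
         + (real n + 1) * (real n + 2 - real k) * ((real n + 1 + real k) * Y)"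
    unfolding m_def by (simp add: algebra_simps)
  also have "\<dots> = (real n + 2) * (real n + 1 + real k) * ((real n + 2 + real k) * c)
         + (real n + 1) * (real n + 2 - real k) * ((real n + 1 - real k) * c)"
    using e1 e2 by simp
  also have "\<dots> = m * ((2 * real n + 3) * c) + (4 * real n + 6) * ((real k)^2 * c)"
    unfolding m_def by (simp add: algebra_simps power2_eq_square)
  also have "\<dots> = m * ((2 * real n + 3) * c + (4 * real n + 6) * Z)"
    unfolding e3 m_def by (simp add: algebra_simps)
  finally have "(real n + 2) * X + (real n + 1) * Y = (2 * real n + 3) * c + (4 * real n + 6) * Z"
    using m0 by simp
  then show ?thesis unfolding X_def Y_def c_def Z_def by (simp add: algebra_simps)
qed

lemma E_top:
  "(n+2)*A(n+2) (n+2) = (4*n+6)*A(n+1) (n+1)"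
proof -
  have a: "(n+2)^2 * A (n+2) (n+2) = (2*n+4) * A (n+2) (n+1)"
    using L2[of "n+1" "n+2"] by (simp add: algebra_simps)
  have b: "A (n+2) (n+1) = (2*n+3) * A (n+1) (n+1)"
    using L1[of "n+1" "n+1"] by (simp add: algebra_simps)
  have "(n+2) * ((n+2)*A(n+2) (n+2)) = (n+2)^2 * A (n+2) (n+2)"
    by (simp only: power2_eq_square mult.assoc)
  also have "\<dots> = (2*n+4) * ((2*n+3) * A (n+1) (n+1))" by (simp only: a b)
  also have "\<dots> = (n+2) * ((4*n+6)*A(n+1) (n+1))" by (simp add: algebra_simps)
  finally have "(n+2) * ((n+2)*A(n+2) (n+2)) = (n+2) * ((4*n+6)*A(n+1) (n+1))" .
  then show ?thesis by (subst (asm) mult_left_cancel) auto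
qed

definition B :: "nat \<Rightarrow> nat \<Rightarrow> nat" where
  "B n k = (if k = 0 then 0 else A (n+1) (k-1))"

lemma E_all: "(n+2)*A(n+2) k + (n+1)*A n k = (2*n+3)*A(n+1) k + (4*n+6)*B n k"
proof -
  consider "k = 0" | "1 \<le> k \<and> k \<le> n+1" | "k = n+2" | "k > n+2" by linarith
  then show ?thesis
  proof cases
    case 1 then show ?thesis by (simp add: A_0 B_def)
  next
    case 2 then show ?thesis using E_main[of k n] B_def by (simp only: of_nat_eq_iff) simp
  next
    case 3 then show ?thesis using E_top[of n] by (simp add: B_def A_zero)
  next
    case 4 then show ?thesis by (simp add: B_def A_zero)
  qed
qed

definition Dn :: "nat \<Rightarrow> nat" where "Dn n = (\<Sum>k\<le>n. A n k)"

lemma Dn_ext: "n \<le> M \<Longrightarrow> Dn n = (\<Sum>k\<le>M. A n k)"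
  unfolding Dn_def by (rule sum.mono_neutral_left) (auto simp: A_zero)

lemma Dn_rec: "(n+2)*Dn(n+2) + (n+1)*Dn n = (6*n+9)*Dn(n+1)"
proof -
  have h1: "Dn n = (\<Sum>k\<le>n+2. A n k)" by (rule Dn_ext) simp
  have h2: "Dn (n+2) = (\<Sum>k\<le>n+2. A (n+2) k)" by (simp only: Dn_def)
  have h3: "Dn (n+1) = (\<Sum>k\<le>n+2. A (n+1) k)" by (rule Dn_ext) simp
  have "(n+2)*Dn(n+2) + (n+1)*Dn n = (\<Sum>k\<le>n+2. (n+2)*A(n+2) k + (n+1)*A n k)"
    by (simp only: h1 h2 sum.distrib sum_distrib_left)
  also have "\<dots> = (\<Sum>k\<le>n+2. (2*n+3)*A(n+1) k + (4*n+6)*B n k)"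
    by (simp only: E_all)
  also have "\<dots> = (2*n+3)*Dn(n+1) + (4*n+6)*(\<Sum>k\<le>Suc (n+1). B n k)"
    by (simp only: h3 sum.distrib sum_distrib_left Suc_eq_plus1 add.assoc one_add_one)
  also have "(\<Sum>k\<le>Suc (n+1). B n k) = Dn (n+1)"
    unfolding sum.atMost_Suc_shift by (simp add: B_def Dn_def)
  finally show ?thesis by (simp add: algebra_simps)
qed
lemma R_A: "R n = (\<Sum>k\<le>n. real (A n k) / (2 * real k - 1))"
  unfolding R_def A_def atLeast0AtMost by simp

lemma R_ext: "n \<le> M \<Longrightarrow> R n = (\<Sum>k\<le>M. real (A n k) / (2 * real k - 1))"
  unfolding R_A by (rule sum.mono_neutral_left) (auto simp: A_zero)

lemma L1r: "(real n + 1 - real k) * real (A (n+1) k) = (real n + 1 + real k) * real (A n k)"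
proof (cases "k \<le> n + 1")
  case True
  have "real ((n + 1 - k) * A (n+1) k) = real ((n + 1 + k) * A n k)" using L1 by metis
  moreover have "real (n + 1 - k) = real n + 1 - real k" using True by (simp add: of_nat_diff)
  ultimately show ?thesis unfolding of_nat_mult by (simp add: add_ac)
next
  case False then show ?thesis by (simp add: A_zero)
qed

lemma den_ne: "2 * real k - 1 \<noteq> 0"
proof
  assume "2 * real k - 1 = 0"
  then have "real (2*k) = real 1" by simp
  then have "2*k = 1" by (simp only: of_nat_eq_iff)
  then show False by presburger
qed

lemma R_term: "(2*real n+1)*(real (A (n+1) k)/(2*real k-1)) =
   (2*real n+3)*(real (A n k)/(2*real k - 1)) + real (A n k) + real(A (n+1) k)"
proof -
  have h: "(real n + 1 - real k) * real (A (n+1) k) = (real n + 1 + real k) * real (A n k)" by (rule L1r)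
  have "(2*real n+1)*real (A (n+1) k) = (2*real n+3)*real (A n k) + (2*real k - 1)*(real (A n k) + real(A (n+1) k))"
    using h by (simp add: algebra_simps)
  then show ?thesis using den_ne[of k] by (simp add: field_simps)
qed

lemma R_rec: "(2*real n+1) * R (n+1) = (2*real n+3) * R n + real (Dn n) + real (Dn (n+1))"
proof -
  have h1: "R n = (\<Sum>k\<le>n+1. real (A n k) / (2 * real k - 1))" by (rule R_ext) simp
  have h2: "Dn n = (\<Sum>k\<le>n+1. A n k)" by (rule Dn_ext) simp
  have "(2*real n+1) * R (n+1) = (\<Sum>k\<le>n+1. (2*real n+1)*(real (A (n+1) k)/(2*real k-1)))"
    unfolding R_A sum_distrib_left ..
  also have "\<dots> = (\<Sum>k\<le>n+1. (2*real n+3)*(real (A n k)/(2*real k - 1)) + real (A n k) + real(A (n+1) k))"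
    by (simp only: R_term)
  also have "\<dots> = (2*real n+3) * R n + real (Dn n) + real (Dn (n+1))"
    unfolding h1 h2 Dn_def[of "n+1"] sum.distrib sum_distrib_left of_nat_sum ..
  finally show ?thesis .
qed
lemma contract:
  fixes x e :: "nat \<Rightarrow> real"
  assumes th: "0 \<le> \<theta>" "\<theta> < 1" and e: "e \<longlonglongrightarrow> 0"
    and ev: "eventually (\<lambda>n. \<bar>x (Suc n)\<bar> \<le> \<theta> * \<bar>x n\<bar> + \<bar>e n\<bar>) sequentially"
  shows "x \<longlonglongrightarrow> 0"
proof (rule LIMSEQ_I)
  fix r :: real assume r: "0 < r"
  define \<delta> where "\<delta> = r * (1 - \<theta>) / 2"
  have \<delta>: "0 < \<delta>" using r th unfolding \<delta>_def by simp
  obtain N1 where N1: "\<And>n. n \<ge> N1 \<Longrightarrow> \<bar>e n\<bar> < \<delta>"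
    using LIMSEQ_D[OF e \<delta>] by auto
  obtain N2 where N2: "\<And>n. n \<ge> N2 \<Longrightarrow> \<bar>x (Suc n)\<bar> \<le> \<theta> * \<bar>x n\<bar> + \<bar>e n\<bar>"
    using ev unfolding eventually_sequentially by auto
  define N where "N = max N1 N2"
  have ind: "\<bar>x (N + m)\<bar> \<le> \<theta>^m * \<bar>x N\<bar> + \<delta> / (1 - \<theta>)" for m
  proof (induction m)
    case 0 then show ?case using \<delta> th by simp
  next
    case (Suc m)
    have "\<bar>x (N + Suc m)\<bar> \<le> \<theta> * \<bar>x (N + m)\<bar> + \<bar>e (N + m)\<bar>"
      using N2[of "N+m"] unfolding N_def by simp
    also have "\<dots> \<le> \<theta> * (\<theta>^m * \<bar>x N\<bar> + \<delta> / (1 - \<theta>)) + \<delta>"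
    proof -
      have "N1 \<le> N + m" unfolding N_def by simp
      then have "\<bar>e (N + m)\<bar> \<le> \<delta>" using N1[of "N+m"] by simp
      then show ?thesis using Suc.IH th by (intro add_mono mult_left_mono) auto
    qed
    also have "\<dots> = \<theta>^Suc m * \<bar>x N\<bar> + \<delta> / (1 - \<theta>)"
      using th by (simp add: field_simps)
    finally show ?case .
  qed
  have p0: "(\<lambda>m. \<theta>^m) \<longlonglongrightarrow> 0" by (rule LIMSEQ_power_zero) (use th in simp)
  have lim: "(\<lambda>m. \<theta>^m * \<bar>x N\<bar>) \<longlonglongrightarrow> 0 * \<bar>x N\<bar>"
    by (rule tendsto_mult[OF p0 tendsto_const])
  have r2: "0 < r/2" using r by simp
  obtain M where M0: "\<forall>m\<ge>M. norm (\<theta>^m * \<bar>x N\<bar> - 0 * \<bar>x N\<bar>) < r/2"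
    using LIMSEQ_D[OF lim r2] by blast
  have M: "\<theta>^m * \<bar>x N\<bar> < r/2" if "m \<ge> M" for m
    using M0 that th by simp
  have "\<forall>n\<ge>N + M. norm (x n - 0) < r"
  proof (intro allI impI)
    fix n assume n: "n \<ge> N + M"
    define m where "m = n - N"
    have m: "n = N + m" "m \<ge> M" using n unfolding m_def by auto
    have "\<delta> / (1 - \<theta>) = r / 2" unfolding \<delta>_def using th by (simp add: field_simps)
    then show "norm (x n - 0) < r" using ind[of m] M[of m] m by simp
  qed
  then show "\<exists>no. \<forall>n\<ge>no. norm (x n - 0) < r" by blast
qed

definition D :: "nat \<Rightarrow> real" where "D n = real (Dn n)"
definition q :: "nat \<Rightarrow> real" where "q n = D (n+1) / D n"
definition LL :: real where "LL = 3 + 2 * sqrt 2"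

lemma Dn_pos: "Dn n \<ge> 1"
proof -
  have "A n 0 \<le> Dn n" unfolding Dn_def by (rule member_le_sum) auto
  then show ?thesis by (simp add: A_0)
qed
lemma D_pos: "D n > 0" using Dn_pos[of n] unfolding D_def by simp
lemma D0: "D 0 = 1" by (simp add: D_def Dn_def A_def)
lemma D1: "D 1 = 3" by (simp add: D_def Dn_def A_def)

lemma D_rec: "D (n+2) = ((6*real n+9) * D (n+1) - (real n+1) * D n) / (real n + 2)"
proof -
  have "real ((n+2)*Dn(n+2) + (n+1)*Dn n) = real ((6*n+9)*Dn(n+1))" using Dn_rec by metis
  then have "(real n+2) * D (n+2) + (real n+1) * D n = (6*real n+9) * D (n+1)"
    unfolding D_def by (simp add: algebra_simps)
  then have "D (n+2) * (real n + 2) = (6*real n+9) * D (n+1) - (real n+1) * D n"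
    by (simp add: algebra_simps)
  then show ?thesis by (simp add: eq_divide_eq)
qed

lemma q_rec: "q (n+1) = ((6*real n+9) - (real n+1) / q n) / (real n + 2)"
proof -
  have p: "D n > 0" "D (n+1) > 0" by (rule D_pos)+
  have "q (n+1) = ((6*real n+9) * D (n+1) - (real n+1) * D n) / (real n + 2) / D (n+1)"
    unfolding q_def using D_rec[of n] by (simp add: add.assoc)
  also have "\<dots> = ((6*real n+9) - (real n+1) * D n / D (n+1)) / (real n + 2)"
    using p by (simp add: field_simps)
  also have "(real n+1) * D n / D (n+1) = (real n+1) / q n"
    unfolding q_def using p by simp
  finally show ?thesis .
qed

lemma q_bounds: "3 \<le> q n \<and> q n \<le> 6"
proof (induction n)
  case 0 then show ?case using D1 by (simp add: q_def D0)
next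
  case (Suc n)
  have q3: "3 \<le> q n" using Suc.IH by simp
  have a: "(real n+1) / q n \<le> (real n+1) / 3"
    using q3 by (intro divide_left_mono) auto
  have b: "(real n+1) / q n \<ge> 0" using q3 by simp
  have "3 * (real n + 2) \<le> ((6*real n+9) - (real n+1) / q n)"
  proof -
    have "(real n+1)/3 \<le> 3 * real n + 3" by simp
    then have "(real n+1) / q n \<le> 3 * real n + 3" using a by linarith
    then show ?thesis by simp
  qed
  then have "3 \<le> ((6*real n+9) - (real n+1) / q n) / (real n + 2)"
    by (simp add: le_divide_eq)
  moreover have "((6*real n+9) - (real n+1) / q n) \<le> 6 * (real n + 2)"
    using b by simp
  then have "((6*real n+9) - (real n+1) / q n) / (real n + 2) \<le> 6"
    by (simp add: divide_le_eq)
  ultimately show ?case using q_rec[of n] by simp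
qed

lemma sqrt2: "sqrt 2 * sqrt 2 = (2::real)" "1.4 < sqrt (2::real)" "sqrt (2::real) < 1.5"
proof -
  show "sqrt 2 * sqrt 2 = (2::real)" by simp
  show "1.4 < sqrt (2::real)" by (rule real_less_rsqrt) (simp add: power2_eq_square)
  show "sqrt (2::real) < 1.5" by (rule real_less_lsqrt) (simp_all add: power2_eq_square)
qed

lemma const_over: "(\<lambda>n. c / (real n + d)) \<longlonglongrightarrow> (0::real)"
proof -
  have "filterlim (\<lambda>n. d + real n) at_top sequentially"
    by (rule filterlim_tendsto_add_at_top[OF tendsto_const filterlim_real_sequentially])
  then have "(\<lambda>n. c / (d + real n)) \<longlonglongrightarrow> 0"
    by (intro tendsto_divide_0[OF tendsto_const]) (rule filterlim_at_top_imp_at_infinity)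
  then show ?thesis by (simp add: add.commute)
qed

lemma q_lim: "q \<longlonglongrightarrow> LL"
proof -
  define e where "e n = q n - LL" for n
  have LLp: "LL \<ge> 5" unfolding LL_def using sqrt2 by simp
  have step: "e (Suc n) = ((real n + 1) * e n / (LL * q n) - 2 * sqrt 2) / (real n + 2)" for n
  proof -
    have q3: "q n \<ge> 3" using q_bounds by simp
    have "e (Suc n) = ((6*real n+9) - (real n+1) / q n) / (real n + 2) - LL"
      using q_rec[of n] unfolding e_def by simp
    also have "\<dots> = ((real n + 1) * (3 - 2 * sqrt 2) - (real n+1) / q n - 2 * sqrt 2) / (real n + 2)"
      unfolding LL_def by (simp add: field_simps)
    also have "\<dots> = ((real n + 1) * e n / (LL * q n) - 2 * sqrt 2) / (real n + 2)"
    proof -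
      have inv: "LL * (3 - 2 * sqrt 2) = 1" unfolding LL_def using sqrt2(1) by (simp add: algebra_simps)
      have "(real n + 1) * e n / (LL * q n) = (real n + 1) / LL - (real n+1) / q n"
        unfolding e_def using q3 LLp by (simp add: field_simps)
      also have "(real n + 1) / LL = (real n + 1) * (LL * (3 - 2 * sqrt 2)) / LL"
        by (simp add: inv)
      also have "\<dots> = (real n + 1) * (3 - 2 * sqrt 2)" using LLp by simp
      finally show ?thesis by simp
    qed
    finally show ?thesis .
  qed
  have bnd: "\<bar>e (Suc n)\<bar> \<le> 1/2 * \<bar>e n\<bar> + \<bar>3 / (real n + 2)\<bar>" for n
  proof -
    have q3: "q n \<ge> 3" using q_bounds by simp
    define a where "a = (real n + 1) / (LL * q n * (real n + 2))"
    have ea: "e (Suc n) = a * e n - 2 * sqrt 2 / (real n + 2)"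
      unfolding step a_def diff_divide_distrib by simp
    have a0: "0 \<le> a" unfolding a_def using q3 LLp by simp
    have a1: "a \<le> 1/2"
    proof -
      have "LL * q n \<ge> 15" using q3 LLp mult_mono[of 5 LL 3 "q n"] by simp
      then have "LL * q n * (real n + 2) \<ge> 15 * (real n + 2)"
        by (intro mult_right_mono) auto
      then have "(real n + 1) \<le> 1/2 * (LL * q n * (real n + 2))"
        by (simp add: algebra_simps)
      then show ?thesis unfolding a_def using q3 LLp by (simp add: divide_le_eq)
    qed
    have "\<bar>e (Suc n)\<bar> \<le> a * \<bar>e n\<bar> + 2 * sqrt 2 / (real n + 2)"
    proof -
      have "\<bar>a * e n - 2 * sqrt 2 / (real n + 2)\<bar> \<le> \<bar>a * e n\<bar> + \<bar>2 * sqrt 2 / (real n + 2)\<bar>"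
        by (rule abs_triangle_ineq4)
      also have "\<dots> = a * \<bar>e n\<bar> + 2 * sqrt 2 / (real n + 2)"
        using a0 by (simp add: abs_mult)
      finally show ?thesis unfolding ea .
    qed
    also have "\<dots> \<le> 1/2 * \<bar>e n\<bar> + 3 / (real n + 2)"
      using a1 sqrt2 by (intro add_mono mult_right_mono divide_right_mono) auto
    finally show ?thesis by simp
  qed
  have "e \<longlonglongrightarrow> 0"
  proof (rule contract[of "1/2" "\<lambda>n. 3 / (real n + 2)"])
    show "(\<lambda>n. 3 / (real n + 2)) \<longlonglongrightarrow> 0"
      by (rule const_over)
  qed (use bnd in \<open>auto intro!: always_eventually\<close>)
  then have "(\<lambda>n. e n + LL) \<longlonglongrightarrow> 0 + LL" by (intro tendsto_intros)
  then show ?thesis unfolding e_def by simp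
qed
lemma H1: "(x::real) > 0 \<Longrightarrow> a > 0 \<Longrightarrow> b > 0 \<Longrightarrow> c > 0 \<Longrightarrow> (y/(b*c))/(x/(a*b)) = y/x*(a/c)"
  by (simp add: field_simps)
lemma H2: "(a::real) > 0 \<Longrightarrow> b > 0 \<Longrightarrow> ((b*r + s)/a)/b = r/a + s/(a*b)"
  by (simp add: field_simps)

lemma H4: "(x::real) > 0 \<Longrightarrow> p > 0 \<Longrightarrow> (p*x + r*p*x)/(x + p*x) = p*(1+r)/(1+p)"
proof -
  assume x: "x > 0" and p: "p > 0"
  have "(p*x + r*p*x)/(x + p*x) = ((p*(1+r))*x)/((1+p)*x)" by (simp add: algebra_simps)
  also have "\<dots> = p*(1+r)/(1+p)" using x by simp
  finally show ?thesis .
qed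

definition u :: "nat \<Rightarrow> real" where
  "u n = (D n + D (n+1)) / ((2*real n+1)*(2*real n+3))"
definition \<rho> :: "nat \<Rightarrow> real" where "\<rho> n = u (n+1) / u n"
definition T :: "nat \<Rightarrow> real" where "T n = R n / (2 * real n + 1)"
definition w :: "nat \<Rightarrow> real" where "w n = T (n+1) / u n"

lemma u_pos: "u n > 0"
  unfolding u_def using D_pos[of n] D_pos[of "n+1"] by (intro divide_pos_pos) auto

lemma q_pos: "q n > 0" using q_bounds[of n] by simp

lemma rho_eq: "\<rho> n = q n * (1 + q (n+1)) / (1 + q n) * ((2*real n+1)/(2*real n+5))"
proof -
  have p: "D n > 0" "D (n+1) > 0" "D (n+2) > 0" by (rule D_pos)+
  have d1: "D (n+1) = q n * D n" unfolding q_def using p by simp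
  have d2: "D (n+2) = q (n+1) * q n * D n" unfolding q_def using p by (simp add: add.assoc)
  have u1: "u (n+1) = (D (n+1) + D (n+2)) / ((2*real n+3)*(2*real n+5))"
    unfolding u_def by (simp add: algebra_simps)
  have "\<rho> n = (D (n+1) + D (n+2)) / (D n + D (n+1)) * ((2*real n+1)/(2*real n+5))"
    unfolding \<rho>_def u1 unfolding u_def using p by (intro H1) auto
  also have "(D (n+1) + D (n+2)) / (D n + D (n+1)) = q n * (1 + q (n+1)) / (1 + q n)"
    unfolding d1 d2 using p q_pos[of n] by (intro H4)
  finally show ?thesis .
qed

lemma LL_gt: "LL > 5" unfolding LL_def using sqrt2 by simp

lemma rho_lim: "\<rho> \<longlonglongrightarrow> LL"
proof -
  have f: "(\<lambda>n. (2*real n+1)/(2*real n+5)) = (\<lambda>n. 1 - 2 / (real n + 5/2))"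
    by (rule ext) (simp add: field_simps)
  have "(\<lambda>n. (2*real n+1)/(2*real n+5)) \<longlonglongrightarrow> 1 - 0"
    unfolding f by (intro tendsto_intros const_over)
  moreover have "(\<lambda>n. q (n+1)) \<longlonglongrightarrow> LL" using LIMSEQ_Suc[OF q_lim] by simp
  ultimately have "(\<lambda>n. q n * (1 + q (n+1)) / (1 + q n) * ((2*real n+1)/(2*real n+5)))
      \<longlonglongrightarrow> LL * (1 + LL) / (1 + LL) * (1 - 0)"
    using LL_gt by (intro tendsto_intros q_lim) auto
  then show ?thesis using LL_gt unfolding rho_eq[abs_def] by simp
qed

lemma T_step: "T (n+1) = T n + u n"
proof -
  have "R (n+1) = ((2*real n+3) * R n + (D n + D (n+1))) / (2*real n+1)"
    using R_rec[of n] unfolding D_def by (simp add: field_simps)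
  moreover have e: "2*real (n+1)+1 = 2*real n+3" by simp
  ultimately have "T (n+1) = (((2*real n+3) * R n + (D n + D (n+1))) / (2*real n+1)) / (2*real n+3)"
    unfolding T_def by simp
  also have "\<dots> = R n / (2*real n+1) + (D n + D (n+1)) / ((2*real n+1)*(2*real n+3))"
    by (rule H2) auto
  finally show ?thesis unfolding T_def u_def by simp
qed

lemma T0: "T 0 = -1" unfolding T_def R_A by (simp add: A_0)

lemma T_pos: "T (Suc n) > 0"
proof (induction n)
  case 0
  have "T 1 = T 0 + u 0" using T_step[of 0] by simp
  also have "\<dots> = 1/3" unfolding T0 u_def using D0 D1 by simp
  finally show ?case by simp
next
  case (Suc n)
  then show ?case using T_step[of "Suc n"] u_pos[of "Suc n"] by simp
qed

lemma w_rec: "w (n+1) = 1 + w n / \<rho> n"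
proof -
  have p: "u n > 0" "u (n+1) > 0" by (rule u_pos)+
  have "w (n+1) = (T (n+1) + u (n+1)) / u (n+1)" unfolding w_def using T_step[of "n+1"] by simp
  also have "\<dots> = 1 + T (n+1) / u (n+1)" using p by (simp add: field_simps)
  also have "T (n+1) / u (n+1) = w n / \<rho> n" unfolding w_def \<rho>_def using p by (simp add: field_simps)
  finally show ?thesis .
qed

lemma w_lim: "w \<longlonglongrightarrow> LL / (LL - 1)"
proof -
  define W where "W = LL / (LL - 1)"
  have W1: "1 - W = - W / LL" unfolding W_def using LL_gt by (simp add: field_simps)
  define e where "e n = w n - W" for n
  define err where "err n = W * (1 / \<rho> n - 1 / LL)" for n
  have estep: "e (Suc n) = e n / \<rho> n + err n" for n
  proof -
    have "e (Suc n) = 1 - W + w n / \<rho> n" unfolding e_def using w_rec[of n] by simp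
    also have "\<dots> = e n / \<rho> n + err n" unfolding W1 e_def err_def by (simp add: diff_divide_distrib algebra_simps)
    finally show ?thesis .
  qed
  have ev2: "eventually (\<lambda>n. \<rho> n > 2) sequentially"
    using rho_lim LL_gt by (intro order_tendstoD(1)) auto
  have ev3: "eventually (\<lambda>n. \<bar>e (Suc n)\<bar> \<le> 1/2 * \<bar>e n\<bar> + \<bar>err n\<bar>) sequentially"
    using ev2
  proof eventually_elim
    case (elim n)
    have "\<bar>e (Suc n)\<bar> \<le> \<bar>e n / \<rho> n\<bar> + \<bar>err n\<bar>" unfolding estep by (rule abs_triangle_ineq)
    also have "\<bar>e n / \<rho> n\<bar> = \<bar>e n\<bar> / \<rho> n" using elim by (simp add: abs_divide)
    also have "\<dots> \<le> \<bar>e n\<bar> / 2" using elim by (intro divide_left_mono) auto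
    finally show ?case by simp
  qed
  have errlim: "err \<longlonglongrightarrow> W * (1 / LL - 1 / LL)"
    unfolding err_def[abs_def] using LL_gt by (intro tendsto_intros rho_lim) auto
  have "e \<longlonglongrightarrow> 0" by (rule contract[of "1/2" err]) (use errlim ev3 in auto)
  then have "(\<lambda>n. e n + W) \<longlonglongrightarrow> 0 + W" by (intro tendsto_intros)
  then show ?thesis unfolding e_def W_def by simp
qed

lemma T_ratio: "(\<lambda>n. T (n+2) / T (n+1)) \<longlonglongrightarrow> LL"
proof -
  have eq: "T (n+2) / T (n+1) = 1 + \<rho> n / w n" for n
  proof -
    have p: "u n > 0" "u (n+1) > 0" "T (n+1) > 0" using u_pos T_pos by auto
    have "T (n+2) / T (n+1) = (T (n+1) + u (n+1)) / T (n+1)" using T_step[of "n+1"] by (simp add: add.assoc)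
    also have "\<dots> = 1 + \<rho> n / w n" unfolding \<rho>_def w_def using p by (simp add: field_simps)
    finally show ?thesis .
  qed
  have "(\<lambda>n. 1 + \<rho> n / w n) \<longlonglongrightarrow> 1 + LL / (LL / (LL - 1))"
    using LL_gt by (intro tendsto_intros rho_lim w_lim) auto
  moreover have "1 + LL / (LL / (LL - 1)) = LL" using LL_gt by (simp add: field_simps)
  ultimately show ?thesis unfolding eq by simp
qed

theorem theorem4p2:
  shows "(\<lambda>n. R (Suc n) / R n) \<longlonglongrightarrow> 3 + 2 * sqrt 2"
proof -
  have eq: "R (n+2) / R (n+1) = (2*real n+5)/(2*real n+3) * (T (n+2) / T (n+1))" for n
  proof -
    have e2: "2*real (n+2)+1 = 2*real n+5" "2*real (n+1)+1 = 2*real n+3" by simp_all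
    have "R (n+2) = (2*real n+5) * T (n+2)" unfolding T_def e2 by simp
    moreover have "R (n+1) = (2*real n+3) * T (n+1)" unfolding T_def e2 by simp
    ultimately show ?thesis by (simp only: times_divide_times_eq)
  qed
  have f: "(\<lambda>n. (2*real n+5)/(2*real n+3)) = (\<lambda>n. 1 + 1 / (real n + 3/2))"
    by (rule ext) (simp add: field_simps)
  have "(\<lambda>n. (2*real n+5)/(2*real n+3)) \<longlonglongrightarrow> 1 + 0"
    unfolding f by (intro tendsto_intros const_over)
  then have "(\<lambda>n. (2*real n+5)/(2*real n+3) * (T (n+2) / T (n+1))) \<longlonglongrightarrow> (1 + 0) * LL"
    by (intro tendsto_intros T_ratio)
  then have "(\<lambda>n. R (Suc (Suc n)) / R (Suc n)) \<longlonglongrightarrow> LL" unfolding eq[symmetric] by simp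
  then show ?thesis unfolding LL_def by (rule LIMSEQ_imp_Suc)
qed

end
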